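(* Let $A\in P(n)$, $m\in\mathbb N$, $p_m=(1,\dots,1)^T\in\mathbb C^m$, and let $A^{(m)}=p_mp_m^*\otimes A\in P(nm)$ (the $m\times m$ block matrix all of whose blocks equal $A$). Then $I(A^{(m)})=I(A)$ and $I(sp,A^{(m)})=I(sp,A)$.
   Context: $P(k)$ denotes positive semidefinite complex $k\times k$ matrices; $\otimes$ is the Kronecker product; $\circ$ is the Hadamard (entrywise) product. For $C\in P(k)$, with $P_k$ the all-ones $k\times k$ matrix, $I(C)=\max\{\lambda\ge0: C-\lambda P_k\ge0\}$, and $I(sp,C)=\min\{\|C\circ B\|: B\in P(k),\ \|B\|=1\}$, where $\|\cdot\|$ is the spectral (operator) norm. *)

theory Defs
  imports Complex_Main
begin

text \<open>Square complex matrices of size k are represented as functions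
  nat \<Rightarrow> nat \<Rightarrow> complex; only entries with indices below k are ever read.
  Vectors in C^k are functions nat \<Rightarrow> complex, only entries below k matter.\<close>

type_synonym cmat = "nat \<Rightarrow> nat \<Rightarrow> complex"
type_synonym cvec = "nat \<Rightarrow> complex"

definition qform :: "nat \<Rightarrow> cmat \<Rightarrow> cvec \<Rightarrow> complex" where
  "qform k C x = (\<Sum>i<k. \<Sum>j<k. cnj (x i) * C i j * x j)"

definition psd :: "nat \<Rightarrow> cmat \<Rightarrow> bool" where
  "psd k C \<longleftrightarrow> (\<forall>x. qform k C x \<in> \<real> \<and> 0 \<le> Re (qform k C x))"

definition vnorm :: "nat \<Rightarrow> cvec \<Rightarrow> real" where
  "vnorm k x = sqrt (\<Sum>i<k. (cmod (x i))\<^sup>2)"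

definition mvmult :: "nat \<Rightarrow> cmat \<Rightarrow> cvec \<Rightarrow> cvec" where
  "mvmult k C x = (\<lambda>i. \<Sum>j<k. C i j * x j)"

definition opnorm :: "nat \<Rightarrow> cmat \<Rightarrow> real" where
  "opnorm k C = Sup {vnorm k (mvmult k C x) | x. vnorm k x \<le> 1}"

text \<open>All-ones matrix P_k, Hadamard product, Kronecker product
  (B of size p, C of size q; result of size p*q, index i = a*q + r).\<close>
definition ones :: cmat where
  "ones = (\<lambda>i j. 1)"

definition hadamard :: "cmat \<Rightarrow> cmat \<Rightarrow> cmat" where
  "hadamard C B = (\<lambda>i j. C i j * B i j)"

definition kron :: "nat \<Rightarrow> cmat \<Rightarrow> cmat \<Rightarrow> cmat" where
  "kron q B C = (\<lambda>i j. B (i div q) (j div q) * C (i mod q) (j mod q))"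

definition Iidx :: "nat \<Rightarrow> cmat \<Rightarrow> real" where
  "Iidx k C = Sup {t. t \<ge> 0 \<and> psd k (\<lambda>i j. C i j - of_real t * ones i j)}"

definition Isp :: "nat \<Rightarrow> cmat \<Rightarrow> real" where
  "Isp k C = Inf {opnorm k (hadamard C B) | B. psd k B \<and> opnorm k B = 1}"

end

theory Submission
  imports Defs "HOL-Analysis.Convex"
begin


lemma sum_block:
  fixes f :: "nat \<Rightarrow> 'a::comm_monoid_add"
  shows "(\<Sum>i<n*m. f i) = (\<Sum>a<m. \<Sum>r<n. f (a*n+r))"
proof -
  have "(\<Sum>i<n*m. f i) = (\<Sum>a<m. sum f {a*n..<a*n+n})"
    using sum.nat_group[of f n m] by (simp add: mult.commute)
  also have "\<dots> = (\<Sum>a<m. \<Sum>r<n. f (a*n+r))"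
    by (rule sum.cong[OF refl]) (simp add: sum.atLeastLessThan_shift_0[of f] lessThan_atLeast0 add.commute comp_def)
  finally show ?thesis .
qed

lemma cs_complex:
  fixes a b :: "'i \<Rightarrow> complex"
  shows "(cmod (\<Sum>i\<in>I. a i * b i))\<^sup>2 \<le> (\<Sum>i\<in>I. (cmod (a i))\<^sup>2) * (\<Sum>i\<in>I. (cmod (b i))\<^sup>2)"
proof -
  have "cmod (\<Sum>i\<in>I. a i * b i) \<le> (\<Sum>i\<in>I. cmod (a i) * cmod (b i))"
    by (metis (no_types, lifting) norm_mult norm_sum sum.cong)
  moreover have "0 \<le> cmod (\<Sum>i\<in>I. a i * b i)" by simp
  ultimately have "(cmod (\<Sum>i\<in>I. a i * b i))\<^sup>2 \<le> (\<Sum>i\<in>I. cmod (a i) * cmod (b i))\<^sup>2"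
    by (simp add: power_mono)
  also have "\<dots> \<le> (\<Sum>i\<in>I. (cmod (a i))\<^sup>2) * (\<Sum>i\<in>I. (cmod (b i))\<^sup>2)"
    by (rule Cauchy_Schwarz_ineq_sum)
  finally show ?thesis .
qed

definition ns :: "nat \<Rightarrow> cvec \<Rightarrow> real" where
  "ns k x = (\<Sum>i<k. (cmod (x i))\<^sup>2)"

lemma ns_nonneg: "0 \<le> ns k x" unfolding ns_def by (simp add: sum_nonneg)

lemma vnorm_ns: "vnorm k x = sqrt (ns k x)" unfolding vnorm_def ns_def ..

lemma vnorm_sq: "(vnorm k x)\<^sup>2 = ns k x" by (simp add: vnorm_ns ns_nonneg)

lemma vnorm_nonneg: "0 \<le> vnorm k x" by (simp add: vnorm_ns ns_nonneg)

lemma vnorm_le1: "vnorm k x \<le> 1 \<longleftrightarrow> ns k x \<le> 1" by (simp add: vnorm_ns)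

lemma ns_cong:
  assumes "\<And>i. i < k \<Longrightarrow> x i = y i" shows "ns k x = ns k y"
  unfolding ns_def by (intro sum.cong refl) (simp add: assms)

lemma vnorm_cong:
  assumes h: "\<And>i. i < k \<Longrightarrow> x i = y i" shows "vnorm k x = vnorm k y"
  using ns_cong[OF h] by (simp add: vnorm_ns)

lemma ns_scale: "ns k (\<lambda>i. c * x i) = (cmod c)\<^sup>2 * ns k x"
  unfolding ns_def by (simp add: norm_mult power_mult_distrib sum_distrib_left)

lemma vnorm_scale: "vnorm k (\<lambda>i. c * x i) = cmod c * vnorm k x"
  by (simp add: vnorm_ns ns_scale real_sqrt_mult)

lemma mvmult_cong: "(\<And>i j. i < k \<Longrightarrow> j < k \<Longrightarrow> C i j = D i j) \<Longrightarrow> (\<And>j. j < k \<Longrightarrow> x j = y j)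
   \<Longrightarrow> i < k \<Longrightarrow> mvmult k C x i = mvmult k D y i"
  unfolding mvmult_def by (rule sum.cong) auto

lemma mvmult_scale_vec: "mvmult k C (\<lambda>j. c * x j) = (\<lambda>i. c * mvmult k C x i)"
  unfolding mvmult_def by (auto simp: sum_distrib_left algebra_simps)

lemma mvmult_scale_mat: "mvmult k (\<lambda>i j. c * C i j) x = (\<lambda>i. c * mvmult k C x i)"
  unfolding mvmult_def by (auto simp: sum_distrib_left algebra_simps)

lemma ns_mvmult_bound:
  "ns k (mvmult k C x) \<le> (\<Sum>i<k. \<Sum>j<k. (cmod (C i j))\<^sup>2) * ns k x"
proof -
  have "ns k (mvmult k C x) = (\<Sum>i<k. (cmod (\<Sum>j<k. C i j * x j))\<^sup>2)"
    unfolding ns_def mvmult_def ..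
  also have "\<dots> \<le> (\<Sum>i<k. (\<Sum>j<k. (cmod (C i j))\<^sup>2) * ns k x)"
    unfolding ns_def by (rule sum_mono) (rule cs_complex)
  also have "\<dots> = (\<Sum>i<k. \<Sum>j<k. (cmod (C i j))\<^sup>2) * ns k x"
    by (simp add: sum_distrib_right)
  finally show ?thesis .
qed

definition OS :: "nat \<Rightarrow> cmat \<Rightarrow> real set" where
  "OS k C = {vnorm k (mvmult k C x) | x. vnorm k x \<le> 1}"

lemma opnorm_OS: "opnorm k C = Sup (OS k C)" unfolding opnorm_def OS_def ..

lemma OS_ne: "OS k C \<noteq> {}" unfolding OS_def by (auto intro!: exI[of _ "\<lambda>_. 0"] simp: vnorm_ns ns_def)

lemma OS_bdd: "bdd_above (OS k C)"
proof -
  define F where "F = (\<Sum>i<k. \<Sum>j<k. (cmod (C i j))\<^sup>2)"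
  have F0: "0 \<le> F" unfolding F_def by (simp add: sum_nonneg)
  have "v \<le> sqrt F" if vin: "v \<in> OS k C" for v
  proof -
    obtain x where v: "v = vnorm k (mvmult k C x)" and x0: "vnorm k x \<le> 1"
      using vin unfolding OS_def by blast
    have x: "ns k x \<le> 1" using x0 vnorm_le1 by blast
    have "ns k (mvmult k C x) \<le> F * ns k x" unfolding F_def by (rule ns_mvmult_bound)
    also have "\<dots> \<le> F" using x F0 by (simp add: mult_left_le)
    finally show ?thesis using v by (simp add: vnorm_ns)
  qed
  then show ?thesis by (rule bdd_aboveI)
qed

lemma opnorm_ge:
  assumes "vnorm k x \<le> 1" shows "vnorm k (mvmult k C x) \<le> opnorm k C"
proof -
  have "vnorm k (mvmult k C x) \<in> OS k C" unfolding OS_def using assms by blast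
  then show ?thesis unfolding opnorm_OS by (rule cSup_upper[OF _ OS_bdd])
qed

lemma opnorm_nonneg: "0 \<le> opnorm k C"
  using opnorm_ge[of k "\<lambda>_. 0" C] vnorm_nonneg[of k "mvmult k C (\<lambda>_. 0)"]
  by (simp add: vnorm_ns ns_def mvmult_def)

lemma opnorm_le: "(\<And>x. vnorm k x \<le> 1 \<Longrightarrow> vnorm k (mvmult k C x) \<le> M) \<Longrightarrow> opnorm k C \<le> M"
  unfolding opnorm_OS by (rule cSup_least[OF OS_ne]) (unfold OS_def, blast)

lemma opnorm_bound: "vnorm k (mvmult k C x) \<le> opnorm k C * vnorm k x"
proof (cases "vnorm k x = 0")
  case True
  then have "ns k x = 0" using vnorm_sq[of k x] by simp
  then have "\<forall>i\<in>{..<k}. (cmod (x i))\<^sup>2 = 0" unfolding ns_def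
    using sum_nonneg_eq_0_iff[of "{..<k}" "\<lambda>i. (cmod (x i))\<^sup>2"] by simp
  then have x0: "\<And>i. i < k \<Longrightarrow> x i = 0" by simp
  have "mvmult k C x = (\<lambda>i. 0)" unfolding mvmult_def
    by (rule ext, rule sum.neutral) (simp add: x0)
  then have "vnorm k (mvmult k C x) = 0" by (simp add: vnorm_ns ns_def)
  then show ?thesis using True by simp
next
  case False
  define v where "v = vnorm k x"
  have v0: "v > 0" using False vnorm_nonneg[of k x] unfolding v_def by linarith
  have "vnorm k (\<lambda>i. of_real (1/v) * x i) = cmod (of_real (1/v)) * vnorm k x"
    by (rule vnorm_scale)
  also have "\<dots> = 1" using v0 unfolding v_def by (simp add: norm_divide)
  finally have "vnorm k (\<lambda>i. of_real (1/v) * x i) = 1" .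
  then have "vnorm k (mvmult k C (\<lambda>i. of_real (1/v) * x i)) \<le> opnorm k C"
    by (intro opnorm_ge) simp
  then have h: "(1/v) * vnorm k (mvmult k C x) \<le> opnorm k C"
    using v0 by (simp only: mvmult_scale_vec vnorm_scale) (simp add: norm_divide)
  have "vnorm k (mvmult k C x) = v * ((1/v) * vnorm k (mvmult k C x))" using v0 by simp
  also have "\<dots> \<le> v * opnorm k C" using h v0 by (intro mult_left_mono) auto
  finally show ?thesis unfolding v_def by (simp add: mult.commute)
qed

lemma opnorm_cong:
  assumes h: "\<And>i j. i < k \<Longrightarrow> j < k \<Longrightarrow> C i j = D i j"
  shows "opnorm k C = opnorm k D"
proof -
  have e: "vnorm k (mvmult k C x) = vnorm k (mvmult k D x)" for x
  proof (rule vnorm_cong)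
    fix i assume "i < k"
    then show "mvmult k C x i = mvmult k D x i"
      unfolding mvmult_def using h by (intro sum.cong refl) auto
  qed
  have "OS k C = OS k D" unfolding OS_def by (simp only: e)
  then show ?thesis by (simp add: opnorm_OS)
qed

lemma opnorm_scale:
  assumes "c > 0"
  shows "opnorm k (\<lambda>i j. of_real c * C i j) = c * opnorm k C"
proof (rule antisym)
  show "opnorm k (\<lambda>i j. of_real c * C i j) \<le> c * opnorm k C"
    using assms by (intro opnorm_le) (simp add: mvmult_scale_mat vnorm_scale opnorm_ge)
  have "opnorm k C \<le> opnorm k (\<lambda>i j. of_real c * C i j) / c"
  proof (rule opnorm_le)
    fix x assume "vnorm k x \<le> 1"
    then have "vnorm k (mvmult k (\<lambda>i j. of_real c * C i j) x) \<le> opnorm k (\<lambda>i j. of_real c * C i j)"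
      by (rule opnorm_ge)
    then show "vnorm k (mvmult k C x) \<le> opnorm k (\<lambda>i j. of_real c * C i j) / c"
      using assms by (simp add: mvmult_scale_mat vnorm_scale field_simps)
  qed
  then show "c * opnorm k C \<le> opnorm k (\<lambda>i j. of_real c * C i j)"
    using assms by (simp add: field_simps)
qed



definition bil :: "nat \<Rightarrow> cmat \<Rightarrow> cvec \<Rightarrow> cvec \<Rightarrow> complex" where
  "bil k C y x = (\<Sum>i<k. \<Sum>j<k. cnj (y i) * C i j * x j)"

lemma qform_bil: "qform k C x = bil k C x x" unfolding qform_def bil_def ..

lemma bil_mv: "bil k C y x = (\<Sum>i<k. cnj (y i) * mvmult k C x i)"
  unfolding bil_def mvmult_def by (simp add: sum_distrib_left mult.assoc)

lemma qform_mv: "qform k C x = (\<Sum>i<k. cnj (x i) * mvmult k C x i)"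
  by (simp add: qform_bil bil_mv)

lemma qform_add: "qform k C (\<lambda>i. y i + t * x i) =
   qform k C y + t * bil k C y x + cnj t * bil k C x y + cnj t * t * qform k C x"
proof -
  have "qform k C (\<lambda>i. y i + t * x i) = (\<Sum>i<k. \<Sum>j<k. cnj (y i) * C i j * y j
     + t * (cnj (y i) * C i j * x j) + cnj t * (cnj (x i) * C i j * y j) + cnj t * t * (cnj (x i) * C i j * x j))"
    unfolding qform_def by (intro sum.cong refl) (simp add: algebra_simps)
  also have "\<dots> = qform k C y + t * bil k C y x + cnj t * bil k C x y + cnj t * t * qform k C x"
    unfolding qform_def bil_def by (simp add: sum.distrib sum_distrib_left)
  finally show ?thesis .
qed

lemma psd_real: "psd k C \<Longrightarrow> qform k C x = of_real (Re (qform k C x))"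
  unfolding psd_def by (metis Reals_cases Re_complex_of_real)

lemma psd_herm:
  assumes "psd k C"
  shows "bil k C x y = cnj (bil k C y x)"
proof -
  let ?a = "bil k C y x" and ?b = "bil k C x y"
  have r1: "Im (qform k C (\<lambda>i. y i + 1 * x i)) = 0" "Im (qform k C (\<lambda>i. y i + \<i> * x i)) = 0"
    "Im (qform k C x) = 0" "Im (qform k C y) = 0"
    using assms unfolding psd_def by (auto simp: complex_is_Real_iff)
  then have "Im (?a + ?b) = 0" "Im (\<i> * ?a - \<i> * ?b) = 0"
    unfolding qform_add by (simp_all add: algebra_simps)
  then show ?thesis by (simp add: complex_eq_iff)
qed

lemma psd_cs:
  assumes "psd k C"
  shows "(cmod (bil k C y x))\<^sup>2 \<le> Re (qform k C y) * Re (qform k C x)"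
proof -
  define c where "c = bil k C y x"
  define p where "p = Re (qform k C x)"
  define q where "q = Re (qform k C y)"
  have p0: "p \<ge> 0" using assms unfolding psd_def p_def by auto
  have key: "0 \<le> q - 2 * s * (cmod c)\<^sup>2 + s\<^sup>2 * (cmod c)\<^sup>2 * p" for s :: real
  proof -
    let ?t = "- (of_real s * cnj c)"
    have "0 \<le> Re (qform k C (\<lambda>i. y i + ?t * x i))" using assms unfolding psd_def by auto
    also have "qform k C (\<lambda>i. y i + ?t * x i) = qform k C y + ?t * c + cnj ?t * cnj c + cnj ?t * ?t * qform k C x"
      unfolding qform_add c_def using psd_herm[OF assms, of x y] by simp
    also have "\<dots> = qform k C y - 2 * of_real (s * (cmod c)\<^sup>2) + of_real (s\<^sup>2 * (cmod c)\<^sup>2) * qform k C x"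
    proof -
      have cc: "c * cnj c = of_real ((cmod c)\<^sup>2)" by (rule complex_norm_square[symmetric])
      have e1: "?t * c = - of_real (s * (cmod c)\<^sup>2)"
        by (simp only: mult_minus_left of_real_mult cc[symmetric]) (simp add: algebra_simps)
      have e2: "cnj ?t * cnj c = - of_real (s * (cmod c)\<^sup>2)"
        by (simp only: of_real_mult cc[symmetric]) (simp add: algebra_simps)
      have e3: "cnj ?t * ?t = of_real (s\<^sup>2 * (cmod c)\<^sup>2)"
        by (simp only: of_real_mult cc[symmetric]) (simp add: algebra_simps power2_eq_square)
      show ?thesis unfolding e1 e2 e3 by simp
    qed
    also have "Re \<dots> = q - 2 * s * (cmod c)\<^sup>2 + s\<^sup>2 * (cmod c)\<^sup>2 * p"
      unfolding p_def q_def by simp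
    finally show ?thesis .
  qed
  show ?thesis
  proof (cases "p = 0")
    case True
    show ?thesis
    proof (rule ccontr)
      assume "\<not> ?thesis"
      then have "(cmod c)\<^sup>2 > q * p" unfolding c_def p_def q_def by simp
      then have c0: "(cmod c)\<^sup>2 > 0" using True by simp
      have "0 \<le> q - 2 * ((q+1) / (2 * (cmod c)\<^sup>2)) * (cmod c)\<^sup>2" using key[of "(q+1) / (2 * (cmod c)\<^sup>2)"] True by simp
      then show False using c0 by simp
    qed
  next
    case False
    then have pp: "p > 0" using p0 by simp
    have "0 \<le> q - 2 * (1/p) * (cmod c)\<^sup>2 + (1/p)\<^sup>2 * (cmod c)\<^sup>2 * p" by (rule key)
    then have "0 \<le> q - (cmod c)\<^sup>2 / p" using pp by (simp add: power2_eq_square field_simps)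
    then have "(cmod c)\<^sup>2 \<le> q * p" using pp by (simp add: field_simps)
    then show ?thesis unfolding c_def p_def q_def .
  qed
qed

lemma qform_bound: "cmod (qform k C x) \<le> opnorm k C * ns k x"
proof -
  have "(cmod (qform k C x))\<^sup>2 \<le> ns k x * ns k (mvmult k C x)"
    unfolding qform_mv ns_def using cs_complex[of "\<lambda>i. cnj (x i)" "mvmult k C x" "{..<k}"] by simp
  then have "cmod (qform k C x) \<le> sqrt (ns k x * ns k (mvmult k C x))"
    by (simp add: real_le_rsqrt)
  also have "\<dots> = vnorm k x * vnorm k (mvmult k C x)" by (simp add: vnorm_ns real_sqrt_mult)
  also have "\<dots> \<le> vnorm k x * (opnorm k C * vnorm k x)"
    by (rule mult_left_mono[OF opnorm_bound vnorm_nonneg])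
  also have "\<dots> = opnorm k C * ns k x" using vnorm_sq[of k x] by (simp add: power2_eq_square)
  finally show ?thesis .
qed

lemma psd_key:
  assumes "psd k B"
  shows "ns k (mvmult k B x) \<le> opnorm k B * Re (qform k B x)"
proof -
  define y where "y = mvmult k B x"
  have "bil k B y x = (\<Sum>i<k. cnj (y i) * y i)" by (simp add: bil_mv y_def)
  also have "\<dots> = of_real (ns k y)" unfolding ns_def of_real_sum
    by (intro sum.cong refl) (simp only: complex_norm_square mult.commute)
  finally have b: "bil k B y x = of_real (ns k y)" .
  have "(ns k y)\<^sup>2 \<le> Re (qform k B y) * Re (qform k B x)"
    using psd_cs[OF assms, of y x] b by (simp add: ns_nonneg)
  also have "\<dots> \<le> (opnorm k B * ns k y) * Re (qform k B x)"
  proof (rule mult_right_mono)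
    show "Re (qform k B y) \<le> opnorm k B * ns k y"
      using qform_bound[of k B y] complex_Re_le_cmod[of "qform k B y"] by linarith
    show "0 \<le> Re (qform k B x)" using assms unfolding psd_def by auto
  qed
  finally have "ns k y * ns k y \<le> ns k y * (opnorm k B * Re (qform k B x))"
    by (simp add: power2_eq_square algebra_simps)
  moreover have "0 \<le> opnorm k B * Re (qform k B x)"
    using assms opnorm_nonneg[of k B] unfolding psd_def by auto
  ultimately show ?thesis
    using ns_nonneg[of k y] unfolding y_def[symmetric]
    by (metis mult_le_cancel_left order_le_less)
qed



lemma divmod_block [simp]: "(r::nat) < n \<Longrightarrow> (a*n+r) div n = a" "(r::nat) < n \<Longrightarrow> (a*n+r) mod n = r"
  by auto

lemma qform_cong: "(\<And>i. i < k \<Longrightarrow> x i = y i) \<Longrightarrow> qform k C x = qform k C y"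
  unfolding qform_def by (intro sum.cong refl) auto

lemma qform_cong_mat: "(\<And>i j. i < k \<Longrightarrow> j < k \<Longrightarrow> C i j = D i j) \<Longrightarrow> qform k C x = qform k D x"
  unfolding qform_def by (intro sum.cong refl) auto

lemma psd_cong: "(\<And>i j. i < k \<Longrightarrow> j < k \<Longrightarrow> C i j = D i j) \<Longrightarrow> psd k C = psd k D"
  unfolding psd_def using qform_cong_mat by metis

lemma kron_expand:
  assumes "n > 0"
  shows "qform (n*m) (kron n ones C) x = qform n C (\<lambda>r. \<Sum>a<m. x (a*n+r))"
proof -
  have "qform (n*m) (kron n ones C) x =
     (\<Sum>a<m. \<Sum>r<n. \<Sum>b<m. \<Sum>s<n. cnj (x (a*n+r)) * C r s * x (b*n+s))"
    unfolding qform_def sum_block[of _ n m] kron_def ones_def by simp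
  also have "\<dots> = (\<Sum>r<n. \<Sum>a<m. \<Sum>b<m. \<Sum>s<n. cnj (x (a*n+r)) * C r s * x (b*n+s))"
    by (rule sum.swap)
  also have "\<dots> = (\<Sum>r<n. \<Sum>s<n. \<Sum>a<m. \<Sum>b<m. cnj (x (a*n+r)) * C r s * x (b*n+s))"
  proof -
    have sw: "(\<Sum>a<m. \<Sum>b<m. \<Sum>s<n. cnj (x (a*n+r)) * C r s * x (b*n+s))
       = (\<Sum>s<n. \<Sum>a<m. \<Sum>b<m. cnj (x (a*n+r)) * C r s * x (b*n+s))" for r
    proof -
      have "(\<Sum>a<m. \<Sum>b<m. \<Sum>s<n. cnj (x (a*n+r)) * C r s * x (b*n+s))
         = (\<Sum>a<m. \<Sum>s<n. \<Sum>b<m. cnj (x (a*n+r)) * C r s * x (b*n+s))"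
        by (rule sum.cong[OF refl]) (rule sum.swap)
      also have "\<dots> = (\<Sum>s<n. \<Sum>a<m. \<Sum>b<m. cnj (x (a*n+r)) * C r s * x (b*n+s))"
        by (rule sum.swap)
      finally show ?thesis .
    qed
    show ?thesis by (rule sum.cong[OF refl], rule sw)
  qed
  also have "\<dots> = qform n C (\<lambda>r. \<Sum>a<m. x (a*n+r))"
  proof -
    have e: "cnj (\<Sum>a<m. x (a*n+r)) * C r s * (\<Sum>b<m. x (b*n+s))
       = (\<Sum>a<m. \<Sum>b<m. cnj (x (a*n+r)) * C r s * x (b*n+s))" for r s
      by (simp add: cnj_sum sum_distrib_right sum_distrib_left) (rule sum.swap)
    show ?thesis unfolding qform_def
      by (rule sum.cong[OF refl], rule sum.cong[OF refl], rule e[symmetric])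
  qed
  finally show ?thesis .
qed

lemma psd_kron_iff:
  assumes "n > 0" "m > 0"
  shows "psd (n*m) (kron n ones C) \<longleftrightarrow> psd n C"
proof
  assume "psd n C" then show "psd (n*m) (kron n ones C)"
    unfolding psd_def kron_expand[OF assms(1)] by blast
next
  assume h: "psd (n*m) (kron n ones C)"
  show "psd n C" unfolding psd_def
  proof
    fix x
    define x0 where "x0 = (\<lambda>i. if i < n then x i else (0::complex))"
    have e: "(\<Sum>a<m. x0 (a*n+r)) = x r" if "r < n" for r
    proof -
      have "(\<Sum>a<m. x0 (a*n+r)) = (\<Sum>a<m. if a = 0 then x r else 0)"
      proof (intro sum.cong refl)
        fix a show "x0 (a*n+r) = (if a = 0 then x r else 0)"
        proof (cases "a = 0")
          case False then have "a*n \<ge> n" using assms by simp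
          then have "\<not> a*n+r < n" by linarith
          then show ?thesis using False unfolding x0_def by simp
        qed (simp add: x0_def that)
      qed
      also have "\<dots> = x r" using assms by simp
      finally show ?thesis .
    qed
    have "qform n C x = qform (n*m) (kron n ones C) x0"
      unfolding kron_expand[OF assms(1)] by (rule qform_cong) (simp add: e)
    then show "qform n C x \<in> \<real> \<and> 0 \<le> Re (qform n C x)" using h unfolding psd_def by simp
  qed
qed

definition diag0 :: "nat \<Rightarrow> cmat \<Rightarrow> cmat" where
  "diag0 n B = (\<lambda>i j. if i < n \<and> j < n then B i j else 0)"

lemma qform_diag0:
  assumes "n \<le> k" shows "qform k (diag0 n B) x = qform n B x"
proof -
  have "qform k (diag0 n B) x = (\<Sum>i<k. \<Sum>j<k. if i < n \<and> j < n then cnj (x i) * B i j * x j else 0)"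
    unfolding qform_def diag0_def by (intro sum.cong refl) auto
  also have "\<dots> = (\<Sum>i<k. if i < n then (\<Sum>j<n. cnj (x i) * B i j * x j) else 0)"
  proof (intro sum.cong refl)
    fix i
    have "(\<Sum>j<k. if i < n \<and> j < n then cnj (x i) * B i j * x j else 0)
        = (\<Sum>j\<in>{..<n}. if i < n \<and> j < n then cnj (x i) * B i j * x j else 0)"
      by (rule sum.mono_neutral_right) (use assms in auto)
    then show "(\<Sum>j<k. if i < n \<and> j < n then cnj (x i) * B i j * x j else 0)
      = (if i < n then (\<Sum>j<n. cnj (x i) * B i j * x j) else 0)" by auto
  qed
  also have "\<dots> = (\<Sum>i\<in>{..<n}. if i < n then (\<Sum>j<n. cnj (x i) * B i j * x j) else 0)"
    by (rule sum.mono_neutral_right) (use assms in auto)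
  also have "\<dots> = qform n B x" unfolding qform_def by simp
  finally show ?thesis .
qed

lemma psd_diag0: "n \<le> k \<Longrightarrow> psd k (diag0 n B) = psd n B"
  unfolding psd_def by (simp add: qform_diag0)

lemma ns_trunc:
  assumes "n \<le> k" shows "ns k (\<lambda>i. if i < n then y i else 0) = ns n y"
proof -
  have "ns k (\<lambda>i. if i < n then y i else 0) = (\<Sum>i\<in>{..<n}. (cmod (if i < n then y i else 0))\<^sup>2)"
    unfolding ns_def by (rule sum.mono_neutral_right) (use assms in auto)
  then show ?thesis unfolding ns_def by simp
qed

lemma ns_mono: "n \<le> k \<Longrightarrow> ns n y \<le> ns k y"
  unfolding ns_def by (rule sum_mono2) auto

lemma mvmult_diag0:
  assumes "n \<le> k" shows "mvmult k (diag0 n B) x = (\<lambda>i. if i < n then mvmult n B x i else 0)"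
proof
  fix i
  have "mvmult k (diag0 n B) x i = (\<Sum>j\<in>{..<n}. diag0 n B i j * x j)"
    unfolding mvmult_def by (rule sum.mono_neutral_right) (use assms in \<open>auto simp: diag0_def\<close>)
  then show "mvmult k (diag0 n B) x i = (if i < n then mvmult n B x i else 0)"
    by (simp add: diag0_def mvmult_def)
qed

lemma mvmult_trunc: "mvmult n B (\<lambda>j. if j < n then x j else 0) = mvmult n B x"
  unfolding mvmult_def by (rule ext, rule sum.cong) auto

lemma opnorm_diag0:
  assumes "n \<le> k" shows "opnorm k (diag0 n B) = opnorm n B"
proof -
  have "OS k (diag0 n B) = OS n B"
  proof
    show "OS k (diag0 n B) \<subseteq> OS n B"
    proof
      fix v assume "v \<in> OS k (diag0 n B)"
      then obtain x where v: "v = vnorm k (mvmult k (diag0 n B) x)" and x: "vnorm k x \<le> 1"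
        unfolding OS_def by blast
      have "v = vnorm n (mvmult n B x)" unfolding v vnorm_ns mvmult_diag0[OF assms] ns_trunc[OF assms] ..
      moreover have "vnorm n x \<le> 1" using x ns_mono[OF assms, of x] by (simp add: vnorm_le1)
      ultimately show "v \<in> OS n B" unfolding OS_def by blast
    qed
    show "OS n B \<subseteq> OS k (diag0 n B)"
    proof
      fix v assume "v \<in> OS n B"
      then obtain x where v: "v = vnorm n (mvmult n B x)" and x: "vnorm n x \<le> 1"
        unfolding OS_def by blast
      define x0 where "x0 = (\<lambda>j. if j < n then x j else 0)"
      have "v = vnorm k (mvmult k (diag0 n B) x0)"
        unfolding v vnorm_ns mvmult_diag0[OF assms] ns_trunc[OF assms] x0_def mvmult_trunc ..
      moreover have "vnorm k x0 \<le> 1" using x unfolding x0_def vnorm_ns ns_trunc[OF assms] .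
      ultimately show "v \<in> OS k (diag0 n B)" unfolding OS_def by blast
    qed
  qed
  then show ?thesis by (simp add: opnorm_OS)
qed



definition cmp :: "nat \<Rightarrow> nat \<Rightarrow> cvec \<Rightarrow> cmat \<Rightarrow> cmat" where
  "cmp n m w C = (\<lambda>r s. \<Sum>a<m. \<Sum>b<m. cnj (w (a*n+r)) * C (a*n+r) (b*n+s) * w (b*n+s))"

definition Wv :: "nat \<Rightarrow> cvec \<Rightarrow> cvec \<Rightarrow> cvec" where
  "Wv n w v = (\<lambda>i. w i * v (i mod n))"

definition Wadj :: "nat \<Rightarrow> nat \<Rightarrow> cvec \<Rightarrow> cvec \<Rightarrow> cvec" where
  "Wadj n m w y = (\<lambda>r. \<Sum>a<m. cnj (w (a*n+r)) * y (a*n+r))"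

lemma mv_Wv:
  assumes "n > 0"
  shows "mvmult (n*m) C (Wv n w v) i = (\<Sum>b<m. \<Sum>s<n. C i (b*n+s) * w (b*n+s) * v s)"
  unfolding mvmult_def sum_block[of _ n m] Wv_def by (simp add: mult.assoc)

lemma mv_cmp:
  assumes "n > 0"
  shows "mvmult n (cmp n m w C) v r = Wadj n m w (mvmult (n*m) C (Wv n w v)) r"
proof -
  have "mvmult n (cmp n m w C) v r = (\<Sum>s<n. \<Sum>a<m. \<Sum>b<m. cnj (w (a*n+r)) * (C (a*n+r) (b*n+s) * w (b*n+s) * v s))"
    unfolding mvmult_def cmp_def sum_distrib_right by (simp add: mult.assoc)
  also have "\<dots> = (\<Sum>a<m. \<Sum>s<n. \<Sum>b<m. cnj (w (a*n+r)) * (C (a*n+r) (b*n+s) * w (b*n+s) * v s))"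
    by (rule sum.swap)
  also have "\<dots> = (\<Sum>a<m. \<Sum>b<m. \<Sum>s<n. cnj (w (a*n+r)) * (C (a*n+r) (b*n+s) * w (b*n+s) * v s))"
    by (rule sum.cong[OF refl]) (rule sum.swap)
  also have "\<dots> = Wadj n m w (mvmult (n*m) C (Wv n w v)) r"
    unfolding Wadj_def mv_Wv[OF assms] by (simp add: sum_distrib_left)
  finally show ?thesis .
qed

lemma qform_cmp:
  assumes "n > 0"
  shows "qform n (cmp n m w C) v = qform (n*m) C (Wv n w v)"
proof -
  let ?Y = "mvmult (n*m) C (Wv n w v)"
  have "qform n (cmp n m w C) v = (\<Sum>r<n. \<Sum>a<m. cnj (v r) * (cnj (w (a*n+r)) * ?Y (a*n+r)))"
    unfolding qform_mv mv_cmp[OF assms] Wadj_def by (simp add: sum_distrib_left)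
  also have "\<dots> = (\<Sum>a<m. \<Sum>r<n. cnj (v r) * (cnj (w (a*n+r)) * ?Y (a*n+r)))"
    by (rule sum.swap)
  also have "\<dots> = qform (n*m) C (Wv n w v)"
    unfolding qform_mv sum_block[of _ n m] Wv_def by (simp add: algebra_simps)
  finally show ?thesis .
qed

lemma psd_cmp: "n > 0 \<Longrightarrow> psd (n*m) C \<Longrightarrow> psd n (cmp n m w C)"
  unfolding psd_def by (simp add: qform_cmp)

lemma ns_Wv:
  assumes "n > 0" and hw: "\<And>r. r < n \<Longrightarrow> (\<Sum>a<m. (cmod (w (a*n+r)))\<^sup>2) \<le> 1"
  shows "ns (n*m) (Wv n w v) \<le> ns n v"
proof -
  have "ns (n*m) (Wv n w v) = (\<Sum>a<m. \<Sum>r<n. (cmod (w (a*n+r)))\<^sup>2 * (cmod (v r))\<^sup>2)"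
    unfolding ns_def sum_block[of _ n m] Wv_def by (simp add: norm_mult power_mult_distrib)
  also have "\<dots> = (\<Sum>r<n. \<Sum>a<m. (cmod (w (a*n+r)))\<^sup>2 * (cmod (v r))\<^sup>2)" by (rule sum.swap)
  also have "\<dots> = (\<Sum>r<n. (\<Sum>a<m. (cmod (w (a*n+r)))\<^sup>2) * (cmod (v r))\<^sup>2)"
    by (simp add: sum_distrib_right)
  also have "\<dots> \<le> (\<Sum>r<n. 1 * (cmod (v r))\<^sup>2)"
    by (intro sum_mono mult_right_mono hw) auto
  finally show ?thesis unfolding ns_def by simp
qed

lemma ns_Wadj:
  assumes "n > 0" and hw: "\<And>r. r < n \<Longrightarrow> (\<Sum>a<m. (cmod (w (a*n+r)))\<^sup>2) \<le> 1"
  shows "ns n (Wadj n m w y) \<le> ns (n*m) y"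
proof -
  have cs: "(cmod (Wadj n m w y r))\<^sup>2 \<le> (\<Sum>a<m. (cmod (w (a*n+r)))\<^sup>2) * (\<Sum>a<m. (cmod (y (a*n+r)))\<^sup>2)" for r
    unfolding Wadj_def using cs_complex[of "\<lambda>a. cnj (w (a*n+r))" "\<lambda>a. y (a*n+r)" "{..<m}"] by simp
  have "ns n (Wadj n m w y) \<le> (\<Sum>r<n. (\<Sum>a<m. (cmod (w (a*n+r)))\<^sup>2) * (\<Sum>a<m. (cmod (y (a*n+r)))\<^sup>2))"
    unfolding ns_def by (rule sum_mono) (rule cs)
  also have "\<dots> \<le> (\<Sum>r<n. 1 * (\<Sum>a<m. (cmod (y (a*n+r)))\<^sup>2))"
    by (intro sum_mono mult_right_mono hw) (auto intro: sum_nonneg)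
  also have "\<dots> = (\<Sum>r<n. \<Sum>a<m. (cmod (y (a*n+r)))\<^sup>2)" by simp
  also have "\<dots> = (\<Sum>a<m. \<Sum>r<n. (cmod (y (a*n+r)))\<^sup>2)" by (rule sum.swap)
  also have "\<dots> = ns (n*m) y" unfolding ns_def sum_block[of _ n m] ..
  finally show ?thesis .
qed

lemma opnorm_cmp:
  assumes "n > 0" and hw: "\<And>r. r < n \<Longrightarrow> (\<Sum>a<m. (cmod (w (a*n+r)))\<^sup>2) \<le> 1"
  shows "opnorm n (cmp n m w C) \<le> opnorm (n*m) C"
proof (rule opnorm_le)
  fix v assume v: "vnorm n v \<le> 1"
  have "ns n (mvmult n (cmp n m w C) v) = ns n (Wadj n m w (mvmult (n*m) C (Wv n w v)))"
    by (rule ns_cong, rule mv_cmp[OF assms(1)])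
  also have "\<dots> \<le> ns (n*m) (mvmult (n*m) C (Wv n w v))" by (rule ns_Wadj[OF assms])
  also have "\<dots> = (vnorm (n*m) (mvmult (n*m) C (Wv n w v)))\<^sup>2" by (simp add: vnorm_sq)
  also have "\<dots> \<le> (opnorm (n*m) C * vnorm (n*m) (Wv n w v))\<^sup>2"
    by (intro power_mono opnorm_bound vnorm_nonneg)
  also have "\<dots> = (opnorm (n*m) C)\<^sup>2 * ns (n*m) (Wv n w v)" by (simp add: power_mult_distrib vnorm_sq)
  also have "\<dots> \<le> (opnorm (n*m) C)\<^sup>2 * 1"
  proof (rule mult_left_mono)
    show "ns (n*m) (Wv n w v) \<le> 1" using ns_Wv[OF assms, of v] v by (simp add: vnorm_le1)
  qed simp
  finally have "(vnorm n (mvmult n (cmp n m w C) v))\<^sup>2 \<le> (opnorm (n*m) C)\<^sup>2" by (simp add: vnorm_sq)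
  then show "vnorm n (mvmult n (cmp n m w C) v) \<le> opnorm (n*m) C"
    using opnorm_nonneg vnorm_nonneg power2_le_imp_le by blast
qed



lemma qform_scale: "qform k (\<lambda>i j. c * C i j) x = c * qform k C x"
  unfolding qform_def by (simp add: sum_distrib_left algebra_simps)

lemma psd_scale: "psd k C \<Longrightarrow> c \<ge> 0 \<Longrightarrow> psd k (\<lambda>i j. of_real c * C i j)"
  unfolding psd_def qform_scale
  by (metis Re_complex_of_real Reals_cases Reals_mult Reals_of_real mult_nonneg_nonneg of_real_mult)

lemma build_w:
  fixes u :: cvec and m :: nat
  assumes n0: "n > 0"
  and zr_def: "zr = (\<lambda>r. sqrt (\<Sum>a<m. (cmod (u (a*n+r)))\<^sup>2))"
  and w_def: "w = (\<lambda>i. if zr (i mod n) = 0 then 0 else u i / of_real (zr (i mod n)))"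
  and z_def: "z = (\<lambda>r. complex_of_real (zr r))"
  shows "\<And>r. r < n \<Longrightarrow> (\<Sum>a<m. (cmod (w (a*n+r)))\<^sup>2) \<le> 1"
    and "\<And>i. i < n*m \<Longrightarrow> Wv n w z i = u i"
    and "ns n z = ns (n*m) u"
proof -
  have S0: "0 \<le> (\<Sum>a<m. (cmod (u (a*n+r)))\<^sup>2)" for r by (simp add: sum_nonneg)
  have zr2: "(zr r)\<^sup>2 = (\<Sum>a<m. (cmod (u (a*n+r)))\<^sup>2)" for r unfolding zr_def using S0 by simp
  show "(\<Sum>a<m. (cmod (w (a*n+r)))\<^sup>2) \<le> 1" if r: "r < n" for r
  proof (cases "zr r = 0")
    case True
    then show ?thesis unfolding w_def using r by simp
  next
    case False
    have "(\<Sum>a<m. (cmod (w (a*n+r)))\<^sup>2) = (\<Sum>a<m. (cmod (u (a*n+r)))\<^sup>2 / (zr r)\<^sup>2)"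
      unfolding w_def using r False by (simp add: norm_divide power_divide)
    also have "\<dots> = (\<Sum>a<m. (cmod (u (a*n+r)))\<^sup>2) / (zr r)\<^sup>2" by (simp add: sum_divide_distrib)
    also have "\<dots> = 1" using False by (simp add: zr2[of r, symmetric])
    finally show ?thesis by simp
  qed
  show "Wv n w z i = u i" if i: "i < n*m" for i
  proof (cases "zr (i mod n) = 0")
    case True
    define a where "a = i div n"
    define r where "r = i mod n"
    have ia: "i = a*n + r" unfolding a_def r_def by simp
    have am: "a < m" using i n0 unfolding a_def by (simp add: less_mult_imp_div_less mult.commute)
    have "(\<Sum>a<m. (cmod (u (a*n+r)))\<^sup>2) = 0" using zr2[of r] True unfolding r_def by simp
    then have "\<forall>a\<in>{..<m}. (cmod (u (a*n+r)))\<^sup>2 = 0"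
      using sum_nonneg_eq_0_iff[of "{..<m}" "\<lambda>a. (cmod (u (a*n+r)))\<^sup>2"] by simp
    then have "u i = 0" using am ia by simp
    then show ?thesis unfolding Wv_def w_def using True by simp
  next
    case False
    then show ?thesis unfolding Wv_def w_def z_def by simp
  qed
  have "ns n z = (\<Sum>r<n. \<Sum>a<m. (cmod (u (a*n+r)))\<^sup>2)"
    unfolding ns_def z_def using zr2 by simp
  also have "\<dots> = (\<Sum>a<m. \<Sum>r<n. (cmod (u (a*n+r)))\<^sup>2)" by (rule sum.swap)
  also have "\<dots> = ns (n*m) u" unfolding ns_def sum_block[of _ n m] ..
  finally show "ns n z = ns (n*m) u" .
qed

definition Sset :: "nat \<Rightarrow> cmat \<Rightarrow> real set" where
  "Sset k C = {opnorm k (hadamard C B) | B. psd k B \<and> opnorm k B = 1}"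

lemma Isp_S: "Isp k C = Inf (Sset k C)" unfolding Isp_def Sset_def ..

lemma dir2_step:
  assumes n0: "n > 0" and B: "psd (n*m) B" "opnorm (n*m) B = 1"
    and t: "0 < t" "t < 1"
  shows "\<exists>B''. psd n B'' \<and> opnorm n B'' = 1 \<and>
     opnorm n (hadamard A B'') \<le> opnorm (n*m) (hadamard (kron n ones A) B) / t"
proof -
  let ?N = "n*m"
  let ?y = "opnorm ?N (hadamard (kron n ones A) B)"
  have "sqrt t < Sup (OS ?N B)" using B(2) t unfolding opnorm_OS by simp
  then obtain v where "v \<in> OS ?N B" "sqrt t < v"
    using less_cSup_iff[OF OS_ne OS_bdd] by blast
  then obtain x where x: "vnorm ?N x \<le> 1" and bx: "sqrt t < vnorm ?N (mvmult ?N B x)"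
    unfolding OS_def by blast
  have "t < ns ?N (mvmult ?N B x)"
  proof -
    have "(sqrt t)\<^sup>2 < (vnorm ?N (mvmult ?N B x))\<^sup>2"
      using bx t by (intro power_strict_mono) auto
    then show ?thesis using t by (simp add: vnorm_sq)
  qed
  also have "\<dots> \<le> Re (qform ?N B x)" using psd_key[OF B(1), of x] B(2) by simp
  finally have p: "t < Re (qform ?N B x)" .
  define zr where "zr = (\<lambda>r. sqrt (\<Sum>a<m. (cmod (x (a*n+r)))\<^sup>2))"
  define w where "w = (\<lambda>i. if zr (i mod n) = 0 then 0 else x i / of_real (zr (i mod n)))"
  define z where "z = (\<lambda>r. complex_of_real (zr r))"
  note bw = build_w[OF n0 zr_def w_def z_def]
  define C' where "C' = cmp n m w B"
  have psdC': "psd n C'" unfolding C'_def by (rule psd_cmp[OF n0 B(1)])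
  have qz: "qform n C' z = qform ?N B x"
    unfolding C'_def qform_cmp[OF n0] by (rule qform_cong) (rule bw(2))
  have nz: "ns n z \<le> 1" using bw(3) x by (simp add: vnorm_le1)
  define c where "c = opnorm n C'"
  have "Re (qform n C' z) \<le> cmod (qform n C' z)" by (rule complex_Re_le_cmod)
  also have "\<dots> \<le> c * ns n z" unfolding c_def by (rule qform_bound)
  also have "\<dots> \<le> c * 1" using nz opnorm_nonneg[of n C'] unfolding c_def by (intro mult_left_mono) auto
  finally have "t < c" using p qz by simp
  then have c0: "c > 0" using t by simp
  define B'' where "B'' = (\<lambda>i j. complex_of_real (1/c) * C' i j)"
  have "psd n B''" unfolding B''_def using psdC' c0 by (intro psd_scale) auto
  moreover have "opnorm n B'' = 1"
  proof -
    have "opnorm n B'' = (1/c) * opnorm n C'" unfolding B''_def by (rule opnorm_scale) (use c0 in simp)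
    then show ?thesis using c0 unfolding c_def by simp
  qed
  moreover have "opnorm n (hadamard A B'') \<le> ?y / t"
  proof -
    have hB: "hadamard A B'' = (\<lambda>i j. complex_of_real (1/c) * hadamard A C' i j)"
      unfolding B''_def hadamard_def by (simp add: algebra_simps)
    have h3: "opnorm n (hadamard A B'') = (1/c) * opnorm n (hadamard A C')"
      unfolding hB by (rule opnorm_scale) (use c0 in simp)
    have h1: "opnorm n (hadamard A C') = opnorm n (cmp n m w (hadamard (kron n ones A) B))"
    proof (rule opnorm_cong)
      fix r s assume rs: "r < n" "s < n"
      show "hadamard A C' r s = cmp n m w (hadamard (kron n ones A) B) r s"
        unfolding C'_def cmp_def hadamard_def kron_def ones_def using rs
        by (simp add: sum_distrib_left algebra_simps)
    qed
    have h2: "opnorm n (cmp n m w (hadamard (kron n ones A) B)) \<le> ?y" by (rule opnorm_cmp[OF n0 bw(1)])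
    have h4: "opnorm n (hadamard A B'') \<le> (1/c) * ?y"
      unfolding h3 h1 using h2 c0 by (intro mult_left_mono) auto
    have h5: "(1/c) * ?y \<le> ?y / t"
    proof -
      have "(1/c) * ?y = ?y / c" by simp
      also have "\<dots> \<le> ?y / t" using \<open>t < c\<close> t opnorm_nonneg by (intro divide_left_mono) auto
      finally show ?thesis .
    qed
    show ?thesis using h4 h5 by linarith
  qed
  ultimately show ?thesis by blast
qed



definition idm :: cmat where "idm = (\<lambda>i j. if i = j then 1 else 0)"

lemma mv_idm: "mvmult n idm x i = (if i < n then x i else 0)"
proof -
  have "mvmult n idm x i = (\<Sum>j<n. if i = j then x j else 0)"
    unfolding mvmult_def idm_def by (intro sum.cong refl) simp
  then show ?thesis by simp
qed

lemma psd_idm: "psd n idm"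
proof -
  have "qform n idm x = of_real (ns n x)" for x
  proof -
    have "qform n idm x = (\<Sum>i<n. cnj (x i) * x i)"
      unfolding qform_mv mv_idm by (intro sum.cong refl) simp
    also have "\<dots> = (\<Sum>i<n. of_real ((cmod (x i))\<^sup>2))"
      by (intro sum.cong refl) (subst complex_norm_square, rule mult.commute)
    also have "\<dots> = of_real (ns n x)" unfolding ns_def of_real_sum ..
    finally show ?thesis .
  qed
  then show ?thesis unfolding psd_def by (simp add: ns_nonneg)
qed

lemma opnorm_idm:
  assumes "n > 0" shows "opnorm n idm = 1"
proof (rule antisym)
  have e: "vnorm n (mvmult n idm x) = vnorm n x" for x
    by (rule vnorm_cong) (simp add: mv_idm)
  show "opnorm n idm \<le> 1" by (rule opnorm_le) (simp add: e)
  define e0 :: cvec where "e0 = (\<lambda>i. if i = 0 then 1 else (0::complex))"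
  have "ns n e0 = (\<Sum>i<n. if i = 0 then 1 else 0)" unfolding ns_def e0_def
    by (intro sum.cong refl) simp
  also have "\<dots> = 1" using assms by (simp add: sum.delta)
  finally have "vnorm n e0 = 1" by (simp add: vnorm_ns)
  then show "1 \<le> opnorm n idm" using opnorm_ge[of n e0 idm] e[of e0] by simp
qed

lemma Sset_bdd: "bdd_below (Sset k C)"
  unfolding Sset_def by (rule bdd_belowI[of _ 0]) (auto simp: opnorm_nonneg)

lemma Sset_ne: "n > 0 \<Longrightarrow> Sset n A \<noteq> {}"
  unfolding Sset_def using psd_idm opnorm_idm by blast

lemma Isp_eq:
  assumes n0: "n > 0" and m0: "m > 0"
  shows "Isp (n*m) (kron n ones A) = Isp n A"
proof -
  let ?K = "kron n ones A"
  let ?SN = "Sset (n*m) ?K" and ?Sn = "Sset n A"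
  have nN: "n \<le> n*m" using m0 by simp
  have sub: "?Sn \<subseteq> ?SN"
  proof
    fix y assume "y \<in> ?Sn"
    then obtain B where B: "psd n B" "opnorm n B = 1" and y: "y = opnorm n (hadamard A B)"
      unfolding Sset_def by blast
    have "hadamard ?K (diag0 n B) = diag0 n (hadamard A B)"
      by (rule ext, rule ext) (simp add: hadamard_def kron_def ones_def diag0_def)
    then have "y = opnorm (n*m) (hadamard ?K (diag0 n B))"
      using y opnorm_diag0[OF nN] by simp
    moreover have "psd (n*m) (diag0 n B)" using B psd_diag0[OF nN] by simp
    moreover have "opnorm (n*m) (diag0 n B) = 1" using B opnorm_diag0[OF nN] by simp
    ultimately show "y \<in> ?SN" unfolding Sset_def by blast
  qed
  have ne: "?Sn \<noteq> {}" by (rule Sset_ne[OF n0])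
  have neN: "?SN \<noteq> {}" using ne sub by blast
  have le1: "Inf ?SN \<le> Inf ?Sn"
    by (rule cInf_superset_mono[OF ne Sset_bdd sub])
  have le2: "Inf ?Sn \<le> Inf ?SN"
  proof (rule cInf_greatest[OF neN])
    fix y assume "y \<in> ?SN"
    then obtain B where B: "psd (n*m) B" "opnorm (n*m) B = 1" and y: "y = opnorm (n*m) (hadamard ?K B)"
      unfolding Sset_def by blast
    have y0: "y \<ge> 0" using y opnorm_nonneg by simp
    show "Inf ?Sn \<le> y"
    proof (rule ccontr)
      assume "\<not> Inf ?Sn \<le> y"
      then have lt: "y < Inf ?Sn" by simp
      define I where "I = Inf ?Sn"
      have I0: "I > 0" using lt y0 unfolding I_def by simp
      define t where "t = (y / I + 1) / 2"
      have yI: "y / I < 1" using lt I0 unfolding I_def by simp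
      have yI0: "0 \<le> y / I" using y0 I0 by simp
      have gen: "\<And>a::real. a < 1 \<Longrightarrow> 0 \<le> a \<Longrightarrow> (a+1)/2 < 1 \<and> 0 < (a+1)/2 \<and> a < (a+1)/2"
        by (auto simp: field_simps)
      have t1a: "t < 1" and t1b: "0 < t" and t1c: "y / I < t"
        using gen[OF yI yI0] unfolding t_def by auto
      note t1 = t1a t1b t1c
      obtain B'' where B'': "psd n B''" "opnorm n B'' = 1" "opnorm n (hadamard A B'') \<le> y / t"
        using dir2_step[OF n0 B t1(2) t1(1), of A] y by blast
      have "I \<le> opnorm n (hadamard A B'')" unfolding I_def
        by (rule cInf_lower[OF _ Sset_bdd]) (use B'' in \<open>auto simp: Sset_def\<close>)
      also have "\<dots> \<le> y / t" by (rule B''(3))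
      also have "y / t < I"
      proof -
        have "y < t * I" using t1(3) I0 by (simp add: divide_less_eq)
        then show ?thesis using t1(2) by (simp add: divide_less_eq mult.commute)
      qed
      finally show False by simp
    qed
  qed
  show ?thesis unfolding Isp_S using le1 le2 by simp
qed

theorem mainTheorem3:
  fixes A :: cmat and n m :: nat
  assumes "n \<ge> 1" and "m \<ge> 1"
    and "psd n A"
  shows "psd (n * m) (kron n ones A)
    \<and> Iidx (n * m) (kron n ones A) = Iidx n A
    \<and> Isp (n * m) (kron n ones A) = Isp n A"
proof -
  have n0: "n > 0" and m0: "m > 0" using assms by auto
  have p: "psd (n * m) (kron n ones A)" using psd_kron_iff[OF n0 m0] assms(3) by simp
  have e: "(\<lambda>i j. kron n ones A i j - of_real t * ones i j) = kron n ones (\<lambda>i j. A i j - of_real t * ones i j)" for t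
    by (rule ext, rule ext) (simp add: kron_def ones_def)
  have "Iidx (n * m) (kron n ones A) = Iidx n A"
    unfolding Iidx_def e psd_kron_iff[OF n0 m0] ..
  then show ?thesis using p Isp_eq[OF n0 m0] by simp
qed


end
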